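(* Consider the multi-site setting described in the context (with Assumption (A3) in force), and suppose Assumption (A5) holds. Then $$\sigma^2[\text{LATE}]=\frac{\sum_{s=1}^S w_s(\text{ITT}_s-\text{FS}_s\times\text{LATE})^2}{\overline{FS^2}}.$$
   Context: Setting. There are $S$ sites. For each site $s$, units have potential treatments $D_{s}(0),D_{s}(1)$ and reduced-form potential outcomes $Y^r_s(z)=Y_s(D_s(z))$ (generic within-site copies); $\text{FS}_s=E(D_s(1)-D_s(0))$, $\text{ITT}_s=E(Y^r_s(1)-Y^r_s(0))$. Non-random weights $w_s\ge0$ sum to one; $\text{FS}=\sum_sw_s\text{FS}_s$, $\text{ITT}=\sum_sw_s\text{ITT}_s$. Assumption (A3): for all $s$, $D_s(1)\ge D_s(0)$, and $\text{FS}>0$. For sites with $\text{FS}_s>0$, $\text{LATE}_s=\text{ITT}_s/\text{FS}_s$ (sites with $\text{FS}_s=0$ receive zero weight in all sums below); $\text{LATE}=\text{ITT}/\text{FS}=\sum_s\frac{w_s\text{FS}_s}{\text{FS}}\text{LATE}_s$. $\sigma^2[\text{LATE}]=\sum_{s=1}^S\frac{w_s\text{FS}_s}{\text{FS}}(\text{LATE}_s-\text{LATE})^2$; $\overline{FS^2}=\sum_sw_s\text{FS}_s^2$. $(\lambda_0,\lambda_1)$ are the coefficients of the weighted least-squares regression of $\text{FS}_s$ on $(1,\text{LATE}_s)$ with weights $\frac{w_s\text{FS}_s}{\text{FS}}$: $(\lambda_0,\lambda_1)=\arg\min_{l_0,l_1}\sum_s\frac{w_s\text{FS}_s}{\text{FS}}(\text{FS}_s-l_0-l_1\text{LATE}_s)^2$;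 $U_s=\text{FS}_s-(\lambda_0+\lambda_1\text{LATE}_s)$. Assumption (A5): $\sum_{s=1}^S\frac{w_s\text{FS}_s}{\text{FS}}U_s\text{LATE}_s^2=0$, and either $\lambda_1=0$ or $\sum_{s=1}^S\frac{w_s\text{FS}_s}{\text{FS}}(\text{LATE}_s-\text{LATE})^3=0$. *)

theory Defs
  imports "HOL-Probability.Probability"
begin

end

theory Submission
  imports Defs
begin

lemma quad_zero:
  fixes A B :: real
  assumes "\<And>t. 0 \<le> - 2 * t * A + t^2 * B" and "B \<ge> 0"
  shows "A = 0"
proof (cases "B = 0")
  case True
  from assms(1)[of A] True have "A^2 \<le> 0" by (simp add: power2_eq_square)
  then show ?thesis by simp
next
  case False
  with assms(2) have Bp: "B > 0" by simp
  from assms(1)[of "A / B"] have "0 \<le> - 2 * (A/B) * A + (A/B)^2 * B" .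
  also have "\<dots> = - (A^2 / B)" using Bp by (simp add: field_simps power2_eq_square)
  finally have "A^2 / B \<le> 0" by simp
  with Bp have "A^2 \<le> 0" by (simp add: divide_le_0_iff)
  then show ?thesis by simp
qed

theorem theorem4:
  fixes S :: nat
    and M :: "nat \<Rightarrow> 'a measure"
    and D0 D1 :: "nat \<Rightarrow> 'a \<Rightarrow> real"
    and Y :: "nat \<Rightarrow> 'a \<Rightarrow> real \<Rightarrow> real"
    and w :: "nat \<Rightarrow> real"
    and l0 l1 :: real
    and FS_s ITT_s LATE_s U p :: "nat \<Rightarrow> real"
    and FS ITT LATE var_LATE FS2 :: real
  assumes prob: "\<And>s. s \<in> {1..S} \<Longrightarrow> prob_space (M s)"
    and int_D0: "\<And>s. s \<in> {1..S} \<Longrightarrow> integrable (M s) (D0 s)"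
    and int_D1: "\<And>s. s \<in> {1..S} \<Longrightarrow> integrable (M s) (D1 s)"
    and int_Y0: "\<And>s. s \<in> {1..S} \<Longrightarrow> integrable (M s) (\<lambda>\<omega>. Y s \<omega> (D0 s \<omega>))"
    and int_Y1: "\<And>s. s \<in> {1..S} \<Longrightarrow> integrable (M s) (\<lambda>\<omega>. Y s \<omega> (D1 s \<omega>))"
    and w_nonneg: "\<And>s. s \<in> {1..S} \<Longrightarrow> w s \<ge> 0"
    and w_sum: "(\<Sum>s\<in>{1..S}. w s) = 1"
    and FS_s_def: "\<And>s. FS_s s = (\<integral>\<omega>. D1 s \<omega> - D0 s \<omega> \<partial>M s)"
    and ITT_s_def: "\<And>s. ITT_s s = (\<integral>\<omega>. Y s \<omega> (D1 s \<omega>) - Y s \<omega> (D0 s \<omega>) \<partial>M s)"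
    and FS_def: "FS = (\<Sum>s\<in>{1..S}. w s * FS_s s)"
    and ITT_def: "ITT = (\<Sum>s\<in>{1..S}. w s * ITT_s s)"
    and A3_mono: "\<And>s \<omega>. s \<in> {1..S} \<Longrightarrow> \<omega> \<in> space (M s) \<Longrightarrow> D1 s \<omega> \<ge> D0 s \<omega>"
    and A3_pos: "FS > 0"
    and LATE_s_def: "\<And>s. LATE_s s = ITT_s s / FS_s s"
    and LATE_def: "LATE = ITT / FS"
    and p_def: "\<And>s. p s = w s * FS_s s / FS"
    and var_def: "var_LATE = (\<Sum>s\<in>{1..S}. p s * (LATE_s s - LATE)^2)"
    and FS2_def: "FS2 = (\<Sum>s\<in>{1..S}. w s * (FS_s s)^2)"
    and wls: "\<And>a b. (\<Sum>s\<in>{1..S}. p s * (FS_s s - l0 - l1 * LATE_s s)^2)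
                  \<le> (\<Sum>s\<in>{1..S}. p s * (FS_s s - a - b * LATE_s s)^2)"
    and U_def: "\<And>s. U s = FS_s s - (l0 + l1 * LATE_s s)"
    and A5_1: "(\<Sum>s\<in>{1..S}. p s * U s * (LATE_s s)^2) = 0"
    and A5_2: "l1 = 0 \<or> (\<Sum>s\<in>{1..S}. p s * (LATE_s s - LATE)^3) = 0"
  shows "var_LATE = (\<Sum>s\<in>{1..S}. w s * (ITT_s s - FS_s s * LATE)^2) / FS2"
proof -
  let ?I = "{1..S}"
  have FSnn: "FS_s s \<ge> 0" if s: "s \<in> ?I" for s
    unfolding FS_s_def using A3_mono[OF s] by (intro integral_nonneg_AE AE_I2) auto
  have ITT0: "ITT_s s = 0" if s: "s \<in> ?I" and z: "FS_s s = 0" for s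
  proof -
    have intd: "integrable (M s) (\<lambda>\<omega>. D1 s \<omega> - D0 s \<omega>)"
      using int_D0[OF s] int_D1[OF s] by auto
    have "AE \<omega> in M s. D1 s \<omega> - D0 s \<omega> = 0"
      using z unfolding FS_s_def
      using integral_nonneg_eq_0_iff_AE[OF intd] A3_mono[OF s] by auto
    then have "AE \<omega> in M s. Y s \<omega> (D1 s \<omega>) - Y s \<omega> (D0 s \<omega>) = 0"
      by eventually_elim simp
    then have "ITT_s s = (\<integral>\<omega>. 0 \<partial>M s)"
      unfolding ITT_s_def by (rule integral_cong_AE[rotated 2])
        (use int_Y0[OF s] int_Y1[OF s] in auto)
    then show ?thesis by simp
  qed
  have ITTeq: "ITT_s s = FS_s s * LATE_s s" if s: "s \<in> ?I" for s
    using ITT0[OF s] unfolding LATE_s_def by (cases "FS_s s = 0") auto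
  have pnn: "p s \<ge> 0" if "s \<in> ?I" for s
    using FSnn[OF that] w_nonneg[OF that] A3_pos unfolding p_def by simp
  have psum: "(\<Sum>s\<in>?I. p s) = 1"
    unfolding p_def using A3_pos by (simp add: sum_divide_distrib[symmetric] FS_def)
  have pL: "(\<Sum>s\<in>?I. p s * LATE_s s) = LATE"
  proof -
    have "(\<Sum>s\<in>?I. p s * LATE_s s) = (\<Sum>s\<in>?I. w s * ITT_s s) / FS"
      unfolding sum_divide_distrib
      by (rule sum.cong) (auto simp: p_def ITTeq)
    then show ?thesis by (simp add: ITT_def LATE_def)
  qed
  define f where "f = (\<lambda>a b. (\<Sum>s\<in>?I. p s * (FS_s s - a - b * LATE_s s)^2))"
  have fmin: "f l0 l1 \<le> f a b" for a b using wls unfolding f_def .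
  have f1: "f (l0 + t) l1 = f l0 l1 - 2 * t * (\<Sum>s\<in>?I. p s * U s) + t^2 * (\<Sum>s\<in>?I. p s)" for t
    unfolding f_def U_def sum_distrib_left sum_subtractf[symmetric] sum.distrib[symmetric]
    by (rule sum.cong) (auto simp: algebra_simps power2_eq_square)
  have f2: "f l0 (l1 + t) = f l0 l1 - 2 * t * (\<Sum>s\<in>?I. p s * U s * LATE_s s) + t^2 * (\<Sum>s\<in>?I. p s * (LATE_s s)^2)" for t
    unfolding f_def U_def sum_distrib_left sum_subtractf[symmetric] sum.distrib[symmetric]
    by (rule sum.cong) (auto simp: algebra_simps power2_eq_square)
  have NE1: "(\<Sum>s\<in>?I. p s * U s) = 0"
  proof (rule quad_zero)
    show "0 \<le> - 2 * t * (\<Sum>s\<in>?I. p s * U s) + t^2 * (\<Sum>s\<in>?I. p s)" for t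
      using fmin[of "l0 + t" l1] f1[of t] by simp
    show "0 \<le> (\<Sum>s\<in>?I. p s)" using psum by simp
  qed
  have NE2: "(\<Sum>s\<in>?I. p s * U s * LATE_s s) = 0"
  proof (rule quad_zero)
    show "0 \<le> - 2 * t * (\<Sum>s\<in>?I. p s * U s * LATE_s s) + t^2 * (\<Sum>s\<in>?I. p s * (LATE_s s)^2)" for t
      using fmin[of l0 "l1 + t"] f2[of t] by simp
    show "0 \<le> (\<Sum>s\<in>?I. p s * (LATE_s s)^2)" using pnn by (intro sum_nonneg) auto
  qed
  define C3 where "C3 = (\<Sum>s\<in>?I. p s * (LATE_s s - LATE)^3)"
  have l1C3: "l1 * C3 = 0" using A5_2 unfolding C3_def by auto
  have FSdec: "FS_s s = l0 + l1 * LATE_s s + U s" for s unfolding U_def by simp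
  have num1: "(\<Sum>s\<in>?I. w s * (ITT_s s - FS_s s * LATE)^2) = FS * (\<Sum>s\<in>?I. p s * FS_s s * (LATE_s s - LATE)^2)"
    unfolding sum_distrib_left
    using A3_pos by (intro sum.cong) (auto simp: ITTeq p_def power2_eq_square field_simps)
  have num2: "(\<Sum>s\<in>?I. p s * FS_s s * (LATE_s s - LATE)^2)
     = l0 * var_LATE + l1 * C3 + l1 * LATE * var_LATE + (\<Sum>s\<in>?I. p s * U s * (LATE_s s)^2)
       - 2 * LATE * (\<Sum>s\<in>?I. p s * U s * LATE_s s) + LATE^2 * (\<Sum>s\<in>?I. p s * U s)"
    unfolding var_def C3_def sum_distrib_left sum_subtractf[symmetric] sum.distrib[symmetric]
    by (rule sum.cong) (auto simp: FSdec algebra_simps power2_eq_square power3_eq_cube)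
  have den1: "FS2 = FS * (\<Sum>s\<in>?I. p s * FS_s s)"
    unfolding FS2_def sum_distrib_left
    using A3_pos by (intro sum.cong) (auto simp: p_def power2_eq_square)
  have den2: "(\<Sum>s\<in>?I. p s * FS_s s) = l0 * (\<Sum>s\<in>?I. p s) + l1 * (\<Sum>s\<in>?I. p s * LATE_s s) + (\<Sum>s\<in>?I. p s * U s)"
    unfolding sum_distrib_left sum.distrib[symmetric]
    by (rule sum.cong) (auto simp: FSdec algebra_simps)
  have FS2pos: "FS2 > 0"
  proof -
    have nn: "\<forall>s\<in>?I. 0 \<le> w s * (FS_s s)^2" using w_nonneg by auto
    have "FS2 \<ge> 0" unfolding FS2_def using nn by (intro sum_nonneg) auto
    moreover have "FS2 \<noteq> 0"
    proof
      assume "FS2 = 0"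
      then have "\<forall>s\<in>?I. w s * (FS_s s)^2 = 0"
        using sum_nonneg_eq_0_iff[of ?I "\<lambda>s. w s * (FS_s s)^2"] nn \<open>FS2 = 0\<close>
        unfolding FS2_def by simp
      then have "\<forall>s\<in>?I. w s * FS_s s = 0" by auto
      then have "FS = 0" unfolding FS_def by (intro sum.neutral) auto
      with A3_pos show False by simp
    qed
    ultimately show ?thesis by simp
  qed
  have "(\<Sum>s\<in>?I. w s * (ITT_s s - FS_s s * LATE)^2) = FS2 * var_LATE"
  proof -
    have "(\<Sum>s\<in>?I. w s * (ITT_s s - FS_s s * LATE)^2) = FS * (l0 * var_LATE + l1 * C3 + l1 * LATE * var_LATE)"
      using num1 num2 NE1 NE2 A5_1 by simp
    also have "\<dots> = FS * (l0 + l1 * LATE) * var_LATE" using l1C3 by (auto simp: algebra_simps)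
    also have "\<dots> = FS2 * var_LATE" using den1 den2 NE1 psum pL by simp
    finally show ?thesis .
  qed
  then show ?thesis using FS2pos by simp
qed

end
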